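(* Let $\mathcal{C}_0=\prod_{i=1}^d[a_i,b_i]$ and let $f\in C^1(\mathcal{C}_0)$ have gradient $g$ Lipschitz on $\mathcal{C}_0$ with constant $L_2\ge0$ (no unconstrainedness assumption). Let $\mathcal{C}=\prod_{i=1}^d[c_i,d_i]\subseteq\mathcal{C}_0$ satisfy $d_i-c_i<b_i-a_i$ for all $i$, and define $\mathbf{x}(\mathcal{C})\in\mathcal{C}$ by $$\mathbf{x}_i(\mathcal{C})=\begin{cases}c_i & c_i=a_i,\\ d_i & d_i=b_i,\\ \frac{c_i+d_i}{2} & \text{otherwise.}\end{cases}$$ If $\mathcal{C}$ contains a point $x_*$ with $f(x_* )=f_*:=\min_{\mathcal{C}_0}f$, then $g(x_* )^T(\mathbf{x}(\mathcal{C})-x_* )=0$ and $$f_*\ \ge\ f(\mathbf{x}(\mathcal{C}))-\frac{L_2}{2}\sum_{i=1}^d\max\{(\mathbf{x}_i(\mathcal{C})-c_i)^2,(\mathbf{x}_i(\mathcal{C})-d_i)^2\}.$$ Consequently, the rule assigning this right-hand side to such cubes, and $-\infty$ to cubes not satisfying $d_i-c_i<b_i-a_i$ for all $i$, is a quasi-lower bound rule for minimizing $f$ over $\mathcal{C}_0$.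
   Context: $f\in C^1(\mathcal{C}_0)$ means $f$ is differentiable on an open set containing $\mathcal{C}_0$. For a subcube $\mathcal{C}$, $f_*(\mathcal{C})=\min_\mathcal{C}f$. A map $\mathbf{qlb}$ from subcubes of $\mathcal{C}_0$ to $[-\infty,\infty]$ is a quasi-lower bound rule if $\mathbf{qlb}(\mathcal{C})\le f_*(\mathcal{C})$ for every subcube $\mathcal{C}$ with $f_*(\mathcal{C})=f_*$. *)

theory Defs
  imports "HOL-Analysis.Analysis"
begin

definition is_subcube :: "real^'n \<Rightarrow> real^'n \<Rightarrow> real^'n \<Rightarrow> real^'n \<Rightarrow> bool" where
  "is_subcube a b c d \<longleftrightarrow> (\<forall>i. a$i \<le> c$i \<and> c$i \<le> d$i \<and> d$i \<le> b$i)"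

definition fmin :: "(real^'n \<Rightarrow> real) \<Rightarrow> real^'n \<Rightarrow> real^'n \<Rightarrow> real" where
  "fmin f c d = Inf (f ` cbox c d)"

definition is_qlb_rule ::
  "(real^'n \<Rightarrow> real) \<Rightarrow> real^'n \<Rightarrow> real^'n \<Rightarrow> (real^'n \<Rightarrow> real^'n \<Rightarrow> ereal) \<Rightarrow> bool" where
  "is_qlb_rule f a b qlb \<longleftrightarrow>
     (\<forall>c d. is_subcube a b c d \<and> fmin f c d = fmin f a b \<longrightarrow> qlb c d \<le> ereal (fmin f c d))"

definition xC :: "real^'n \<Rightarrow> real^'n \<Rightarrow> real^'n \<Rightarrow> real^'n \<Rightarrow> real^'n" where
  "xC a b c d = (\<chi> i. if c$i = a$i then c$i else if d$i = b$i then d$i else (c$i + d$i) / 2)"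

definition bound_val :: "(real^'n \<Rightarrow> real) \<Rightarrow> real \<Rightarrow> real^'n \<Rightarrow> real^'n \<Rightarrow> real^'n \<Rightarrow> real^'n \<Rightarrow> real" where
  "bound_val f L a b c d =
     f (xC a b c d) - L / 2 * (\<Sum>i\<in>UNIV. max (((xC a b c d)$i - c$i)^2) (((xC a b c d)$i - d$i)^2))"

definition qlb_rule3 :: "(real^'n \<Rightarrow> real) \<Rightarrow> real \<Rightarrow> real^'n \<Rightarrow> real^'n \<Rightarrow> real^'n \<Rightarrow> real^'n \<Rightarrow> ereal" where
  "qlb_rule3 f L a b c d =
     (if (\<forall>i. d$i - c$i < b$i - a$i) then ereal (bound_val f L a b c d) else -\<infinity>)"

end

theory Submission
  imports Defs
begin

lemma path_deriv:
  fixes f :: "real^'n \<Rightarrow> real" and g :: "real^'n \<Rightarrow> real^'n"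
  assumes "(f has_derivative (\<lambda>h. g (x + t *\<^sub>R v) \<bullet> h)) (at (x + t *\<^sub>R v))"
  shows "((\<lambda>s. f (x + s *\<^sub>R v)) has_real_derivative (g (x + t *\<^sub>R v) \<bullet> v)) (at t)"
proof -
  have d1: "((\<lambda>s. x + s *\<^sub>R v) has_derivative (\<lambda>s. s *\<^sub>R v)) (at t)"
    by (auto intro!: derivative_eq_intros)
  have X: "((\<lambda>s. f (x + s *\<^sub>R v)) has_derivative (\<lambda>s. g (x + t *\<^sub>R v) \<bullet> (s *\<^sub>R v))) (at t)"
    using has_derivative_compose[OF d1 assms] by (simp add: o_def)
  show ?thesis
    unfolding has_field_derivative_def
    by (rule has_derivative_eq_rhs[OF X]) (simp add: fun_eq_iff inner_scaleR_right)
qed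

lemma descent:
  fixes f :: "real^'n \<Rightarrow> real" and g :: "real^'n \<Rightarrow> real^'n"
  assumes S: "cbox a b \<subseteq> S" "\<forall>x\<in>S. (f has_derivative (\<lambda>h. g x \<bullet> h)) (at x)"
    and lip: "\<forall>x\<in>cbox a b. \<forall>y\<in>cbox a b. norm (g x - g y) \<le> L * norm (x - y)"
    and x: "x \<in> cbox a b" and y: "y \<in> cbox a b"
  shows "f y \<le> f x + g x \<bullet> (y - x) + L/2 * norm (y - x)^2"
proof -
  define h where "h = y - x"
  define \<phi> where "\<phi> t = f (x + t *\<^sub>R h) - t * (g x \<bullet> h) - L/2 * t^2 * norm h^2" for t
  have "\<phi> 1 \<le> \<phi> 0"
  proof (rule DERIV_nonpos_imp_nonincreasing[of 0 1])
    fix t :: real assume t: "0 \<le> t" "t \<le> 1"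
    define z where "z = x + t *\<^sub>R h"
    have zeq: "z = (1 - t) *\<^sub>R x + t *\<^sub>R y" unfolding z_def h_def by (simp add: algebra_simps)
    have z: "z \<in> cbox a b" unfolding zeq using convex_box(1)[of a b] x y t
      unfolding convex_alt by blast
    have "(f has_derivative (\<lambda>h. g z \<bullet> h)) (at z)" using S z by blast
    then have d: "((\<lambda>s. f (x + s *\<^sub>R h)) has_real_derivative (g z \<bullet> h)) (at t)"
      using path_deriv[of f g x t h] unfolding z_def by simp
    have "(\<phi> has_real_derivative (g z \<bullet> h - g x \<bullet> h - L/2 * (2 * t) * norm h^2)) (at t)"
      unfolding \<phi>_def[abs_def]
      by (auto intro!: derivative_eq_intros d)
    moreover have "g z \<bullet> h - g x \<bullet> h - L/2 * (2 * t) * norm h^2 \<le> 0"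
    proof -
      have "g z \<bullet> h - g x \<bullet> h = (g z - g x) \<bullet> h" by (simp add: inner_diff_left)
      also have "\<dots> \<le> norm (g z - g x) * norm h" by (rule norm_cauchy_schwarz)
      also have "\<dots> \<le> L * norm (z - x) * norm h"
        using lip z x by (simp add: mult_right_mono)
      also have "norm (z - x) = t * norm h" unfolding z_def using t by simp
      finally show ?thesis by (simp add: power2_eq_square algebra_simps)
    qed
    ultimately show "\<exists>y. (\<phi> has_real_derivative y) (at t) \<and> y \<le> 0" by blast
  qed simp
  then show ?thesis unfolding \<phi>_def h_def by simp
qed


lemma foc:
  fixes f :: "real^'n \<Rightarrow> real" and g :: "real^'n \<Rightarrow> real^'n"
  assumes S: "cbox a b \<subseteq> S" "\<forall>x\<in>S. (f has_derivative (\<lambda>h. g x \<bullet> h)) (at x)"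
    and xs: "xs \<in> cbox a b" and mn: "\<forall>y\<in>cbox a b. f xs \<le> f y"
    and i: "a$i < xs$i" "xs$i < b$i"
  shows "g xs $ i = 0"
proof -
  define e :: "real^'n" where "e = axis i 1"
  have "(f has_derivative (\<lambda>h. g (xs + 0 *\<^sub>R e) \<bullet> h)) (at (xs + 0 *\<^sub>R e))"
    using S xs by auto
  from path_deriv[of f g xs 0 e, OF this] have D: "((\<lambda>s. f (xs + s *\<^sub>R e)) has_real_derivative g xs $ i) (at 0)"
    by (simp add: e_def inner_axis)
  have mem: "xs + s *\<^sub>R e \<in> cbox a b" if "a$i \<le> xs$i + s" "xs$i + s \<le> b$i" for s
    using xs that unfolding mem_box_cart e_def by (auto simp: axis_def)
  show ?thesis
  proof (rule ccontr)
    assume ne: "g xs $ i \<noteq> 0"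
    show False
    proof (cases "g xs $ i < 0")
      case True
      from DERIV_neg_dec_right[OF D True] obtain d where d: "d > 0"
        "\<forall>h>0. h < d \<longrightarrow> f (xs + (0 + h) *\<^sub>R e) < f (xs + 0 *\<^sub>R e)" by blast
      define h where "h = min d (b$i - xs$i) / 2"
      have "h > 0" "h < d" "h \<le> b$i - xs$i" using d i unfolding h_def by auto
      then have "f (xs + h *\<^sub>R e) < f xs" using d by auto
      moreover have "f xs \<le> f (xs + h *\<^sub>R e)" using mn mem[of h] \<open>h > 0\<close> \<open>h \<le> _\<close> i by auto
      ultimately show False by simp
    next
      case False
      with ne have pos: "g xs $ i > 0" by simp
      from DERIV_pos_inc_left[OF D pos] obtain d where d: "d > 0"
        "\<forall>h>0. h < d \<longrightarrow> f (xs + (0 - h) *\<^sub>R e) < f (xs + 0 *\<^sub>R e)" by blast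
      define h where "h = min d (xs$i - a$i) / 2"
      have "h > 0" "h < d" "h \<le> xs$i - a$i" using d i unfolding h_def by auto
      then have "f (xs + (- h) *\<^sub>R e) < f xs" using d by auto
      moreover have "f xs \<le> f (xs + (- h) *\<^sub>R e)" using mn mem[of "-h"] \<open>h > 0\<close> \<open>h \<le> _\<close> i by auto
      ultimately show False by simp
    qed
  qed
qed


lemma sq_le_max:
  fixes x y c d :: real
  assumes "c \<le> y" "y \<le> d"
  shows "(x - y)^2 \<le> max ((x - c)^2) ((x - d)^2)"
proof (cases "y \<le> x")
  case True
  then have "(x - y)^2 \<le> (x - c)^2" using assms by (intro power_mono) auto
  then show ?thesis by simp
next
  case False
  then have "(y - x)^2 \<le> (d - x)^2" using assms by (intro power_mono) auto
  then show ?thesis by (simp add: power2_commute)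
qed

theorem mainTheorem3:
  fixes f :: "real^'n \<Rightarrow> real" and g :: "real^'n \<Rightarrow> real^'n"
    and a b :: "real^'n" and L :: real
  assumes ab: "\<forall>i. a$i \<le> b$i"
    and C1: "\<exists>S. open S \<and> cbox a b \<subseteq> S \<and>
                 (\<forall>x\<in>S. (f has_derivative (\<lambda>h. g x \<bullet> h)) (at x))"
    and L: "L \<ge> 0"
    and lip: "\<forall>x\<in>cbox a b. \<forall>y\<in>cbox a b. norm (g x - g y) \<le> L * norm (x - y)"
  shows "(\<forall>c d xs. is_subcube a b c d \<and> (\<forall>i. d$i - c$i < b$i - a$i) \<and>
              xs \<in> cbox c d \<and> f xs = fmin f a b \<longrightarrow>
              g xs \<bullet> (xC a b c d - xs) = 0 \<and> fmin f a b \<ge> bound_val f L a b c d)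
         \<and> is_qlb_rule f a b (qlb_rule3 f L a b)"
proof -
  obtain S where S: "open S" "cbox a b \<subseteq> S" "\<forall>x\<in>S. (f has_derivative (\<lambda>h. g x \<bullet> h)) (at x)"
    using C1 by blast
  have cont: "continuous_on (cbox a b) f"
    using S by (meson continuous_at_imp_continuous_on has_derivative_continuous subsetD)
  have contsub: "continuous_on (cbox c d) f" if "is_subcube a b c d" for c d
  proof -
    have "cbox c d \<subseteq> cbox a b" using that unfolding is_subcube_def subset_iff mem_box_cart(2)
      by (meson order_trans)
    then show ?thesis using cont continuous_on_subset by blast
  qed
  have minat: "\<exists>m\<in>cbox c d. fmin f c d = f m \<and> (\<forall>y\<in>cbox c d. f m \<le> f y)"
    if sc0: "is_subcube a b c d" for c d
  proof -
    have "c \<in> cbox c d" using that unfolding is_subcube_def mem_box_cart(2) by simp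
    then have ne: "cbox c d \<noteq> {}" by blast
    obtain m where m: "m \<in> cbox c d" "\<forall>y\<in>cbox c d. f m \<le> f y"
      using continuous_attains_inf[OF compact_cbox ne contsub[OF sc0]] by blast
    have "Inf (f ` cbox c d) = f m"
      by (rule cInf_eq_minimum) (use m in auto)
    then show ?thesis using m unfolding fmin_def by blast
  qed
  have subab: "is_subcube a b a b" using ab unfolding is_subcube_def by auto
  have P1: "g xs \<bullet> (xC a b c d - xs) = 0 \<and> fmin f a b \<ge> bound_val f L a b c d"
    if sc: "is_subcube a b c d" and lt: "\<forall>i. d$i - c$i < b$i - a$i"
      and xsc: "xs \<in> cbox c d" and fx: "f xs = fmin f a b" for c d xs
  proof -
    obtain m where m: "m \<in> cbox a b" "fmin f a b = f m" "\<forall>y\<in>cbox a b. f m \<le> f y"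
      using minat[OF subab] by blast
    have mn: "\<forall>y\<in>cbox a b. f xs \<le> f y" using m fx by simp
    have xsc': "\<forall>i. c$i \<le> xs$i \<and> xs$i \<le> d$i" using xsc mem_box_cart(2) by blast
    have xs: "xs \<in> cbox a b" using xsc' sc unfolding is_subcube_def mem_box_cart(2)
      by (meson order_trans)
    define x where "x = xC a b c d"
    have xcomp: "c$i \<le> x$i \<and> x$i \<le> d$i" for i
    proof -
      have "c$i \<le> d$i" using sc unfolding is_subcube_def by blast
      then show ?thesis unfolding x_def xC_def by simp
    qed
    have x: "x \<in> cbox a b" using xcomp sc unfolding is_subcube_def mem_box_cart(2)
      by (meson order_trans)
    have comp: "g xs $ i * (x - xs) $ i = 0" for i
    proof -
      have sci: "a$i \<le> c$i" "c$i \<le> d$i" "d$i \<le> b$i" using sc unfolding is_subcube_def by auto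
      have lti: "d$i - c$i < b$i - a$i" using lt by auto
      consider "xs$i = a$i" | "xs$i = b$i" | "a$i < xs$i \<and> xs$i < b$i"
        using xs mem_box_cart(2) by (metis order_le_less)
      then show ?thesis
      proof cases
        case 1
        then have "c$i = a$i" using xsc'[rule_format, of i] sci by auto
        then have "x$i = xs$i" using 1 unfolding x_def xC_def by simp
        then show ?thesis by simp
      next
        case 2
        then have "d$i = b$i" using xsc'[rule_format, of i] sci by auto
        moreover have "c$i \<noteq> a$i" using lti \<open>d$i = b$i\<close> by auto
        ultimately have "x$i = xs$i" using 2 unfolding x_def xC_def by simp
        then show ?thesis by simp
      next
        case 3
        then have "g xs $ i = 0" using foc[OF S(2) S(3) xs mn] by blast
        then show ?thesis by simp
      qed
    qed
    have inner0: "g xs \<bullet> (x - xs) = 0"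
      unfolding inner_vec_def inner_real_def using comp by (intro sum.neutral) simp
    have desc: "f x \<le> f xs + g xs \<bullet> (x - xs) + L/2 * norm (x - xs)^2"
      by (rule descent[OF S(2) S(3) lip xs x])
    have "norm (x - xs)^2 = (\<Sum>i\<in>UNIV. (x$i - xs$i)^2)"
      unfolding power2_norm_eq_inner inner_vec_def by (simp add: power2_eq_square)
    also have "\<dots> \<le> (\<Sum>i\<in>UNIV. max ((x$i - c$i)^2) ((x$i - d$i)^2))"
      by (rule sum_mono) (use xsc' sq_le_max in blast)
    finally have "L/2 * norm (x - xs)^2 \<le> L/2 * (\<Sum>i\<in>UNIV. max ((x$i - c$i)^2) ((x$i - d$i)^2))"
      using L by (intro mult_left_mono) auto
    then have "bound_val f L a b c d \<le> f xs"
      using desc inner0 unfolding bound_val_def x_def by linarith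
    then show ?thesis using inner0 fx unfolding x_def by simp
  qed
  have P2: "is_qlb_rule f a b (qlb_rule3 f L a b)"
    unfolding is_qlb_rule_def
  proof (intro allI impI)
    fix c d assume H: "is_subcube a b c d \<and> fmin f c d = fmin f a b"
    show "qlb_rule3 f L a b c d \<le> ereal (fmin f c d)"
    proof (cases "\<forall>i. d$i - c$i < b$i - a$i")
      case True
      obtain m where m: "m \<in> cbox c d" "fmin f c d = f m"
        using minat H by blast
      have "fmin f a b \<ge> bound_val f L a b c d"
        using P1[of c d m] H True m by simp
      then show ?thesis using True H unfolding qlb_rule3_def by simp
    next
      case False
      then have "qlb_rule3 f L a b c d = -\<infinity>" unfolding qlb_rule3_def by (simp only: if_False)
      then show ?thesis by simp
    qed
  qed
  show ?thesis using P1 P2 by blast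
qed

end
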